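(* Let $\varepsilon$ be an integer with $\varepsilon\equiv 0\pmod{4}$. Then there exist infinitely many positive odd integers $n$ with the property that there exist positive integers $d_1, d_2$, each dividing $\frac{n^2+1}{2}$, such that $d_1+d_2=2n+\varepsilon$. *)

theory Defs
  imports Main
begin

end

theory Submission
  imports Defs
begin

fun sq :: "int \<Rightarrow> nat \<Rightarrow> int \<times> int" where
  "sq k 0 = (1, 16*k^2 - 8*k + 5)"
| "sq k (Suc j) = (case sq k j of (x, y) \<Rightarrow> (y, (16*k^2-16*k+6)*y - x + 8*k))"

lemma L6: "(16*k^2-16*k+6::int) \<ge> 6"
proof (cases "k \<le> 0")
  case True
  then have "k^2 \<ge> 0" "-16*k \<ge> 0" by auto
  then show ?thesis by linarith
next
  case False
  then have "k*(k-1) \<ge> 0" by simp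
  then show ?thesis by (simp add: power2_eq_square algebra_simps)
qed

lemma step_inv:
  fixes x y k :: int
  assumes "8*x*y*(2*k^2-2*k+1) = (x+y-4*k)^2+4"
  shows "8*y*((16*k^2-16*k+6)*y - x + 8*k)*(2*k^2-2*k+1) = (y+((16*k^2-16*k+6)*y - x + 8*k)-4*k)^2+4"
proof -
  have "(y+((16*k^2-16*k+6)*y - x + 8*k)-4*k)^2+4 - 8*y*((16*k^2-16*k+6)*y - x + 8*k)*(2*k^2-2*k+1)
     = (x+y-4*k)^2+4 - 8*x*y*(2*k^2-2*k+1)" by algebra
  then show ?thesis using assms by linarith
qed

lemma b1: "4*\<bar>k\<bar> < 16*k^2 - 8*k + (5::int)"
proof (cases "k \<le> 0")
  case True
  have "k^2 \<ge> 0" by simp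
  then show ?thesis using True abs_of_nonpos[OF True] by linarith
next
  case False
  then have "k*k \<ge> k" by (simp add: mult_le_cancel_left1)
  moreover have "\<bar>k\<bar> = k" using False by simp
  ultimately show ?thesis unfolding power2_eq_square by linarith
qed
lemma s3: fixes a b k y L :: int assumes "L*b \<ge> 6*b" "a < b" "4*\<bar>k\<bar> < b" "y = L*b - a + 8*k"
  shows "y > 3*b"
proof -
  have "8*k \<ge> -2*b" using assms(3) by linarith
  then show ?thesis using assms by linarith
qed
lemma inv: "sq k j = (x, y) \<Longrightarrow> 8*x*y*(2*k^2-2*k+1) = (x+y-4*k)^2+4 \<and> 1 \<le> x \<and> x < y \<and> 4*\<bar>k\<bar> < y"
proof (induction j arbitrary: x y)
  case 0
  then have x: "x = 1" and y: "y = 16*k^2 - 8*k + 5" by auto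
  have e: "8*x*y*(2*k^2-2*k+1) = (x+y-4*k)^2+4"
    unfolding x y by algebra
  have "4*\<bar>k\<bar> < y" unfolding y by (rule b1)
  moreover have "x < y"
  proof -
    have "y = (4*k-1)^2 + 4" unfolding y by algebra
    moreover have "(4*k-1)^2 \<ge> 0" by simp
    ultimately show ?thesis using x by linarith
  qed
  ultimately show ?case using e x by simp
next
  case (Suc j)
  obtain a b where ab: "sq k j = (a, b)" by (cases "sq k j")
  with Suc.prems have x: "x = b" and y: "y = (16*k^2-16*k+6)*b - a + 8*k" by auto
  from Suc.IH[OF ab] have I: "8*a*b*(2*k^2-2*k+1) = (a+b-4*k)^2+4" "1 \<le> a" "a < b" "4*\<bar>k\<bar> < b" by auto
  have "(16*k^2-16*k+6)*b \<ge> 6*b" using L6[of k] I by (intro mult_right_mono) auto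
  then have "y > 3*b" using I(3,4) y by (rule s3)
  then show ?case using step_inv[OF I(1)] I x y by simp
qed

lemma mono_sum: "sq k j = (a,b) \<Longrightarrow> sq k (Suc j) = (c,d) \<Longrightarrow> a + b < c + d"
  using inv[of k "Suc j" c d] inv[of k j a b] by auto

theorem theorem1:
  fixes \<epsilon> :: int
  assumes "\<epsilon> mod 4 = 0"
  shows "infinite {n :: int. n > 0 \<and> odd n \<and>
           (\<exists>d1 d2 :: int. d1 > 0 \<and> d2 > 0 \<and>
              d1 dvd ((n^2 + 1) div 2) \<and> d2 dvd ((n^2 + 1) div 2) \<and>
              d1 + d2 = 2 * n + \<epsilon>)}"
proof -
  define k where "k = \<epsilon> div 4"
  have eps: "\<epsilon> = 4*k" using assms unfolding k_def by auto
  define N where "N j = (fst (sq k j) + snd (sq k j) - 4*k) div 2" for j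
  have mem: "N j \<in> {n :: int. n > 0 \<and> odd n \<and>
           (\<exists>d1 d2 :: int. d1 > 0 \<and> d2 > 0 \<and>
              d1 dvd ((n^2 + 1) div 2) \<and> d2 dvd ((n^2 + 1) div 2) \<and>
              d1 + d2 = 2 * n + \<epsilon>)}" and ev: "even (fst (sq k j) + snd (sq k j) - 4*k)" for j
  proof -
    obtain x y where xy: "sq k j = (x, y)" by (cases "sq k j")
    define c where "c = 2*k^2-2*k+1"
    from inv[OF xy] have I: "8*x*y*c = (x+y-4*k)^2+4" "1 \<le> x" "x < y" "4*\<bar>k\<bar> < y"
      unfolding c_def by auto
    define X where "X = x+y-4*k"
    have XE: "X^2 + 4 = 8*(x*y*c)" using I(1) unfolding X_def by (simp add: algebra_simps)
    have "even X"
    proof (rule ccontr)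
      assume "odd X"
      then have "odd (X^2 + 4)" by simp
      with XE show False by simp
    qed
    then obtain n where n: "X = 2*n" by (auto elim: evenE)
    have "4*(n^2+1) = 4*(2*(x*y*c))" using XE unfolding n by (simp add: power2_eq_square algebra_simps)
    then have m: "n^2 + 1 = 2*(x*y*c)" by simp
    have "odd n"
    proof (rule ccontr)
      assume "\<not> odd n"
      then have "odd (n^2+1)" by simp
      with m show False by simp
    qed
    have "X > 0" unfolding X_def using I by (simp add: abs_if split: if_splits)
    then have "n > 0" using n by simp
    have Nj: "N j = n" unfolding N_def xy using n X_def by simp
    have md: "(n^2+1) div 2 = x*y*c" using m by simp
    have "x + y = 2*n + \<epsilon>" using n X_def eps by simp
    have xpos: "x > 0" and ypos: "y > 0" using I by linarith+
    have d1: "x dvd (n^2+1) div 2" unfolding md by simp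
    have d2: "y dvd (n^2+1) div 2" unfolding md by simp
    have "n > 0 \<and> odd n \<and>
           (\<exists>d1 d2 :: int. d1 > 0 \<and> d2 > 0 \<and>
              d1 dvd ((n^2 + 1) div 2) \<and> d2 dvd ((n^2 + 1) div 2) \<and>
              d1 + d2 = 2 * n + \<epsilon>)"
      apply (intro conjI)
      using \<open>n > 0\<close> \<open>odd n\<close> xpos ypos d1 d2 \<open>x + y = 2*n + \<epsilon>\<close> by blast+
    then show "N j \<in> {n :: int. n > 0 \<and> odd n \<and>
           (\<exists>d1 d2 :: int. d1 > 0 \<and> d2 > 0 \<and>
              d1 dvd ((n^2 + 1) div 2) \<and> d2 dvd ((n^2 + 1) div 2) \<and>
              d1 + d2 = 2 * n + \<epsilon>)}" unfolding Nj mem_Collect_eq .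
    show "even (fst (sq k j) + snd (sq k j) - 4*k)" using \<open>even X\<close> xy X_def by simp
  qed
  have "strict_mono N"
    unfolding strict_mono_Suc_iff
  proof
    fix j
    obtain a b where ab: "sq k j = (a,b)" by (cases "sq k j")
    obtain c d where cd: "sq k (Suc j) = (c,d)" by (cases "sq k (Suc j)")
    have "a + b < c + d" using mono_sum[OF ab cd] .
    moreover have "even (a+b-4*k) \<and> even (c+d-4*k)" using ev[of j] ev[of "Suc j"] ab cd by auto
    then have e1: "even (a+b-4*k)" and e2: "even (c+d-4*k)" by blast+
    obtain p where p: "a+b-4*k = 2*p" using e1 by (rule evenE)
    obtain q where q: "c+d-4*k = 2*q" using e2 by (rule evenE)
    have "N j = p" "N (Suc j) = q" unfolding N_def ab cd using p q by simp_all
    then show "N j < N (Suc j)" using p q \<open>a + b < c + d\<close> by linarith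
  qed
  then have "infinite (range N)" using finite_imageD[of N UNIV] strict_mono_imp_inj_on infinite_UNIV_nat by blast
  moreover have "range N \<subseteq> {n :: int. n > 0 \<and> odd n \<and>
           (\<exists>d1 d2 :: int. d1 > 0 \<and> d2 > 0 \<and>
              d1 dvd ((n^2 + 1) div 2) \<and> d2 dvd ((n^2 + 1) div 2) \<and>
              d1 + d2 = 2 * n + \<epsilon>)}" using mem by blast
  ultimately show ?thesis using infinite_super by blast
qed

end
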